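(* Let $1<p<\infty$ and let $f=h+\overline{g}$ be a sense-preserving locally univalent harmonic mapping in $\mathbb{D}$ whose dilatation $w$ is of one of the following forms: (a) $w(z)=z^n$ for some integer $n\ge1$; or (b) $w(z)=\frac{z+a}{1+\overline{a}z}$ for some $a\in\mathbb{D}$. If $f\in\mathcal{BT}_p$, then $f\in\mathcal{BT}_0$, i.e. $\lim_{|z|\to1^-}(1-|z|^2)J_f(z)^{1/2}=0$.
   Context: $\mathbb{D}$ is the unit disk and $dA$ is Lebesgue area measure. A sense-preserving locally univalent harmonic mapping $f:\mathbb{D}\to\mathbb{C}$ is written $f=h+\overline{g}$ with $h,g$ analytic in $\mathbb{D}$, $h'\neq 0$ in $\mathbb{D}$; its dilatation is $w=g'/h'$, analytic with $|w|<1$ in $\mathbb{D}$, and its Jacobian is $J_f=|h'|^2-|g'|^2=|h'|^2(1-|w|^2)$. For a smooth $F:\mathbb{D}\to\mathbb{C}$, $J_F=|F_z|^2-|F_{\bar z}|^2$. For $1<p<\infty$, the Besov-type class $\mathcal{BT}_p$ consists of smooth $F:\mathbb{D}\to\mathbb{C}$ with $\int_{\mathbb{D}}|J_F(z)|^{p/2}(1-|z|^2)^{p-2}\,dA(z)<\infty$. The class $\mathcal{BT}_0$ consists of smooth $F:\mathbb{D}\to\mathbb{C}$ with $\lim_{|z|\to1^-}(1-|z|^2)|J_F(z)|^{1/2}=0$. *)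

theory Defs
  imports "HOL-Complex_Analysis.Complex_Analysis"
begin

definition wirt_z :: "(complex \<Rightarrow> complex) \<Rightarrow> complex \<Rightarrow> complex" where
  "wirt_z F z = (frechet_derivative F (at z) 1 - \<i> * frechet_derivative F (at z) \<i>) / 2"

definition wirt_zbar :: "(complex \<Rightarrow> complex) \<Rightarrow> complex \<Rightarrow> complex" where
  "wirt_zbar F z = (frechet_derivative F (at z) 1 + \<i> * frechet_derivative F (at z) \<i>) / 2"

definition jac :: "(complex \<Rightarrow> complex) \<Rightarrow> complex \<Rightarrow> real" where
  "jac F z = (cmod (wirt_z F z))^2 - (cmod (wirt_zbar F z))^2"

definition BT :: "real \<Rightarrow> (complex \<Rightarrow> complex) set" where
  "BT p = {F. (\<lambda>z. \<bar>jac F z\<bar> powr (p/2) * (1 - (cmod z)^2) powr (p - 2))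
                 integrable_on ball 0 1}"

definition BT0 :: "(complex \<Rightarrow> complex) set" where
  "BT0 = {F. \<forall>\<epsilon>>0. \<exists>r<1. \<forall>z. r < cmod z \<and> cmod z < 1 \<longrightarrow>
                 (1 - (cmod z)^2) * sqrt \<bar>jac F z\<bar> < \<epsilon>}"

end

theory Submission imports Defs begin

lemma has_contour_integral_linepath_same_Im_iff:
  assumes "Im z = c" "Im z' = c" "Re z = a" "Re z' = b" "a < b"
  shows   "(f has_contour_integral I) (linepath z z') \<longleftrightarrow>
             ((\<lambda>x. f (Complex x c)) has_integral I) {a..b}"
proof -
  have "(f has_contour_integral I) (linepath z z') \<longleftrightarrow>
          ((\<lambda>x. f (linepath z z' x) * (z' - z)) has_integral I) {0..1}"
    by (subst has_contour_integral_linepath) simp_all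
  also have "\<dots> \<longleftrightarrow> ((\<lambda>x. f (Complex (a + (b - a) * x) c) * of_real (b - a)) has_integral I) {0..1}"
    using assms
    by (intro has_integral_cong arg_cong2[of _ _ _ _ "(*)"] arg_cong[of _ _ f])
       (auto simp: linepath_def complex_eq_iff algebra_simps)
  also have "{0..1} = (\<lambda>x. x / (b - a)) ` {0..b-a}"
    using assms by simp
  also have "((\<lambda>x. f (Complex (a + (b - a) * x) c) * of_real (b - a)) has_integral I) \<dots> \<longleftrightarrow>
             ((\<lambda>x. f (Complex (a + x) c) * of_real (b-a)) has_integral ((b-a) *\<^sub>R I)) {0..b-a}"
    by (subst has_integral_stretch_real_iff) (use assms in simp_all)
  also have "\<dots> \<longleftrightarrow> ((\<lambda>x. of_real (b-a) * (f (Complex x c))) has_integral (b-a) *\<^sub>R I) {a..b}"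
    by (subst has_integral_shift_real_ivl_iff[where c = "-a"])
       (simp_all add: mult_ac)
  also have "\<dots> \<longleftrightarrow> ((\<lambda>x. f (Complex x c)) has_integral I) {a..b}"
    by (subst has_integral_mult_right_iff) (use assms in \<open>auto simp: scaleR_conv_of_real\<close>)
  finally show ?thesis .
qed


lemma seg_bound_aux:
  fixes F :: "real \<Rightarrow> complex" and g :: "real \<Rightarrow> real"
  assumes "(F has_integral J) {a..b}" "a < b" "s > 0"
    "continuous_on {a'..b'} g" "a' \<le> a" "b \<le> b'"
    "\<And>u. u \<in> {a..b} \<Longrightarrow> cmod (F u) \<le> g u / s" "\<And>u. u \<in> {a'..b'} \<Longrightarrow> 0 \<le> g u"
  shows "cmod J \<le> integral {a'..b'} g / s"
proof -
  have gi: "g integrable_on {a'..b'}" using assms(4) integrable_continuous_real by blast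
  have gi2: "(\<lambda>u. g u / s) integrable_on {a..b}"
    using integrable_on_subinterval[OF gi] assms(5,6) integrable_on_divide by fastforce
  have "cmod J \<le> integral {a..b} (\<lambda>u. g u / s)"
    using integral_norm_bound_integral[OF has_integral_integrable[OF assms(1)] gi2] assms(7)
      integral_unique[OF assms(1)] by metis
  also have "\<dots> = integral {a..b} g / s" by simp
  also have "integral {a..b} g \<le> integral {a'..b'} g"
    using assms(5,6,8) gi integrable_on_subinterval[OF gi]
    by (intro integral_subset_le) auto
  finally show ?thesis using assms(3) by (simp add: divide_right_mono)
qed


lemma square_cauchy_bound:
  fixes G :: "complex \<Rightarrow> complex"
  assumes hol: "G holomorphic_on cbox (z - Complex R R) (z + Complex R R)" and s: "0 < s" "s \<le> R"
  shows "2*pi*cmod (G z) \<le>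
     (integral {Im z - R..Im z + R} (\<lambda>v. cmod (G (Complex (Re z + s) v)))
    + integral {Im z - R..Im z + R} (\<lambda>v. cmod (G (Complex (Re z - s) v)))
    + integral {Re z - R..Re z + R} (\<lambda>u. cmod (G (Complex u (Im z + s))))
    + integral {Re z - R..Re z + R} (\<lambda>u. cmod (G (Complex u (Im z - s))))) / s"
proof -
  define x y where "x = Re z" and "y = Im z"
  define Q where "Q = cbox (z - Complex R R) (z + Complex R R)"
  have Qeq: "Q = {w. x - R \<le> Re w \<and> Re w \<le> x + R \<and> y - R \<le> Im w \<and> Im w \<le> y + R}"
    unfolding Q_def x_def y_def by (auto simp: in_cbox_complex_iff)
  have contG: "continuous_on Q G" using hol unfolding Q_def by (simp add: holomorphic_on_imp_continuous_on)
  define f where "f = (\<lambda>w. G w / (w - z))"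
  have contf: "continuous_on (Q - {z}) f" unfolding f_def
    by (intro continuous_intros continuous_on_subset[OF contG]) auto
  define a1 a2 a3 a4 where "a1 = Complex (x-s) (y-s)" and "a2 = Complex (x+s) (y-s)"
    and "a3 = Complex (x+s) (y+s)" and "a4 = Complex (x-s) (y+s)"
  have rp: "rectpath a1 a3 = linepath a1 a2 +++ linepath a2 a3 +++ linepath a3 a4 +++ linepath a4 a1"
    by (simp add: rectpath_def Let_def a1_def a2_def a3_def a4_def)
  have zbox: "z \<in> box a1 a3" using s by (auto simp: in_box_complex_iff a1_def a3_def x_def y_def)
  have sub: "cbox a1 a3 \<subseteq> Q" using s by (auto simp: Qeq in_cbox_complex_iff a1_def a3_def)
  have "(f has_contour_integral (2*pi * \<i> * winding_number (rectpath a1 a3) z * G z)) (rectpath a1 a3)"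
    unfolding f_def
  proof (rule Cauchy_integral_formula_convex_simple)
    show "convex Q" by (simp add: Q_def convex_box)
    show "G holomorphic_on Q" using hol by (simp add: Q_def)
    show "z \<in> interior Q" using s by (auto simp: Q_def interior_cbox in_box_complex_iff)
    show "valid_path (rectpath a1 a3)" by simp
    show "path_image (rectpath a1 a3) \<subseteq> Q - {z}"
      using sub zbox s by (subst path_image_rectpath_cbox_minus_box) (auto simp: a1_def a3_def)
    show "pathfinish (rectpath a1 a3) = pathstart (rectpath a1 a3)" by simp
  qed
  then have hC: "(f has_contour_integral (2*pi * \<i> * G z)) (rectpath a1 a3)"
    using winding_number_rectpath[OF zbox] by simp
  have ptb: "cmod (f w) \<le> cmod (G w) / s" if "s \<le> \<bar>Im (w - z)\<bar> \<or> s \<le> \<bar>Re (w - z)\<bar>" for w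
  proof -
    have "s \<le> cmod (w - z)" using that abs_Im_le_cmod abs_Re_le_cmod order_trans by blast
    then show ?thesis unfolding f_def using s by (simp add: norm_divide, intro divide_left_mono) (use s in \<open>auto intro!: mult_pos_pos\<close>)
  qed
  have contH: "continuous_on {x-R..x+R} (\<lambda>u. cmod (G (Complex u c)))" if "y - R \<le> c" "c \<le> y + R" for c
    by (rule continuous_on_norm, rule continuous_on_compose2[OF contG]) (use that in \<open>auto intro!: continuous_intros simp: Qeq\<close>)
  have contV: "continuous_on {y-R..y+R} (\<lambda>v. cmod (G (Complex c v)))" if "x - R \<le> c" "c \<le> x + R" for c
    by (rule continuous_on_norm, rule continuous_on_compose2[OF contG]) (use that in \<open>auto intro!: continuous_intros simp: Qeq\<close>)
  have s12: "closed_segment a1 a2 \<subseteq> Q - {z}" using s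
    by (subst closed_segment_same_Im) (auto simp: a1_def a2_def closed_segment_eq_real_ivl Qeq x_def y_def)
  have s23: "closed_segment a2 a3 \<subseteq> Q - {z}" using s
    by (subst closed_segment_same_Re) (auto simp: a3_def a2_def closed_segment_eq_real_ivl Qeq x_def y_def)
  have s34: "closed_segment a3 a4 \<subseteq> Q - {z}" using s
    by (subst closed_segment_same_Im) (auto simp: a3_def a4_def closed_segment_eq_real_ivl Qeq x_def y_def)
  have s41: "closed_segment a4 a1 \<subseteq> Q - {z}" using s
    by (subst closed_segment_same_Re) (auto simp: a1_def a4_def closed_segment_eq_real_ivl Qeq x_def y_def)
  obtain I1 where h1: "(f has_contour_integral I1) (linepath a1 a2)"
    using has_contour_integral_integral[OF contour_integrable_continuous_linepath[OF continuous_on_subset[OF contf s12]]] by blast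
  obtain I2 where h2: "(f has_contour_integral I2) (linepath a2 a3)"
    using has_contour_integral_integral[OF contour_integrable_continuous_linepath[OF continuous_on_subset[OF contf s23]]] by blast
  obtain I3 where h3: "(f has_contour_integral I3) (linepath a3 a4)"
    using has_contour_integral_integral[OF contour_integrable_continuous_linepath[OF continuous_on_subset[OF contf s34]]] by blast
  obtain I4 where h4: "(f has_contour_integral I4) (linepath a4 a1)"
    using has_contour_integral_integral[OF contour_integrable_continuous_linepath[OF continuous_on_subset[OF contf s41]]] by blast
  have "(f has_contour_integral (I1 + (I2 + (I3 + I4)))) (rectpath a1 a3)"
    unfolding rp by (intro has_contour_integral_join h1 h2 h3 h4 valid_path_join) auto
  then have eq: "2*pi * \<i> * G z = I1 + (I2 + (I3 + I4))" using hC has_contour_integral_unique by blast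
  define A where "A = (\<lambda>c. integral {y - R..y + R} (\<lambda>v. cmod (G (Complex c v))))"
  define B where "B = (\<lambda>c. integral {x - R..x + R} (\<lambda>u. cmod (G (Complex u c))))"
  have b1: "cmod I1 \<le> B (y - s) / s"
  proof -
    have "((\<lambda>u. f (Complex u (y-s))) has_integral I1) {x-s..x+s}"
      using h1 s by (subst (asm) has_contour_integral_linepath_same_Im_iff) (auto simp: a1_def a2_def)
    then show ?thesis unfolding B_def
      by (rule seg_bound_aux) (use s in \<open>auto intro!: contH ptb simp: y_def\<close>)
  qed
  have b3: "cmod I3 \<le> B (y + s) / s"
  proof -
    have "((\<lambda>u. f (Complex u (y+s))) has_integral -I3) {x-s..x+s}"
      using has_contour_integral_reverse_linepath[OF h3] s
      by (subst (asm) has_contour_integral_linepath_same_Im_iff) (auto simp: a3_def a4_def)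
    then have "cmod (-I3) \<le> B (y + s) / s" unfolding B_def
      by (rule seg_bound_aux) (use s in \<open>auto intro!: contH ptb simp: y_def\<close>)
    then show ?thesis by simp
  qed
  have b2: "cmod I2 \<le> A (x + s) / s"
  proof -
    have "((\<lambda>v. f (Complex (x+s) v)) has_integral (-\<i> * I2)) {y-s..y+s}"
      using h2 s by (subst (asm) has_contour_integral_linepath_same_Re_iff) (auto simp: a2_def a3_def)
    then have "cmod (-\<i> * I2) \<le> A (x + s) / s" unfolding A_def
      by (rule seg_bound_aux) (use s in \<open>auto intro!: contV ptb simp: x_def\<close>)
    then show ?thesis by (simp add: norm_mult)
  qed
  have b4: "cmod I4 \<le> A (x - s) / s"
  proof -
    have "((\<lambda>v. f (Complex (x-s) v)) has_integral (-\<i> * -I4)) {y-s..y+s}"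
      using has_contour_integral_reverse_linepath[OF h4] s
      by (subst (asm) has_contour_integral_linepath_same_Re_iff) (auto simp: a1_def a4_def)
    then have "cmod (-\<i> * -I4) \<le> A (x - s) / s" unfolding A_def
      by (rule seg_bound_aux) (use s in \<open>auto intro!: contV ptb simp: x_def\<close>)
    then show ?thesis by (simp add: norm_mult)
  qed
  have "2*pi*cmod (G z) = cmod (I1 + (I2 + (I3 + I4)))"
    by (simp add: eq[symmetric] norm_mult)
  also have "\<dots> \<le> cmod I1 + cmod I2 + cmod I3 + cmod I4"
    by (metis (no_types, lifting) add.assoc add_mono norm_triangle_ineq order_trans order_refl)
  also have "\<dots> \<le> B (y - s) / s + A (x + s) / s + B (y + s) / s + A (x - s) / s"
    using b1 b2 b3 b4 by linarith
  finally show ?thesis unfolding A_def B_def x_def y_def by (simp add: add_divide_distrib)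
qed

lemma content_cbox_complex:
  "measure lborel (cbox (Complex a c) (Complex b d)) = measure lborel (cbox (a,c) (b,d))"
proof (cases "a \<le> b \<and> c \<le> d")
  case True
  have ne: "cbox (Complex a c) (Complex b d) \<noteq> {}" using True by (auto simp: cbox_complex_eq intro!: exI[of _ "Complex a c"])
  have "measure lborel (cbox (Complex a c) (Complex b d)) = (b - a) * (d - c)"
    using True ne by (simp add: content_cbox_if Basis_complex_def inner_complex_def)
  then show ?thesis using True by (simp add: content_Pair)
next
  case False
  then have "cbox (Complex a c) (Complex b d) = {}" by (auto simp: cbox_complex_eq)
  moreover have "cbox (a,c) (b,d) = {}" using False by (auto simp: cbox_Pair_eq)
  ultimately show ?thesis by simp
qed

lemma integral_complex_pair:
  fixes F :: "complex \<Rightarrow> 'b::euclidean_space"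
  assumes "F integrable_on cbox (Complex a c) (Complex b d)"
  shows "integral (cbox (Complex a c) (Complex b d)) F = integral (cbox (a,c) (b,d)) (\<lambda>(u,v). F (Complex u v))"
proof -
  have "((\<lambda>x. F ((\<lambda>(u,v). Complex u v) x)) has_integral (1 / 1) *\<^sub>R integral (cbox (Complex a c) (Complex b d)) F)
        ((\<lambda>w. (Re w, Im w)) ` cbox (Complex a c) (Complex b d))"
  proof (rule has_integral_twiddle)
    show "0 < (1::real)" by simp
    show "(\<lambda>(u,v). Complex u v) ((\<lambda>w. (Re w, Im w)) x) = x" for x by simp
    show "(\<lambda>w. (Re w, Im w)) ((\<lambda>(u,v). Complex u v) x) = x" for x by (cases x) simp
    show "continuous (at x) (\<lambda>(u,v). Complex u v)" for x
      unfolding split_beta' Complex_eq by (intro continuous_intros)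
    show "\<exists>w z. (\<lambda>(u,v). Complex u v) ` cbox u v = cbox w z" for u v :: "real \<times> real"
    proof (cases u, cases v)
      fix u1 u2 v1 v2 assume uv: "u = (u1,u2)" "v = (v1,v2)"
      have "(\<lambda>(u,v). Complex u v) ` cbox u v = cbox (Complex u1 u2) (Complex v1 v2)"
        unfolding uv cbox_Pair_eq cbox_complex_eq
        apply (auto simp: image_iff)
        subgoal for x by (rule bexI[of _ "Re x"], rule bexI[of _ "Im x"]) auto
        done
      then show ?thesis by blast
    qed
    show "\<exists>w z. (\<lambda>w. (Re w, Im w)) ` cbox u v = cbox w z" for u v :: complex
    proof -
      have "(\<lambda>w. (Re w, Im w)) ` cbox u v = cbox (Re u, Im u) (Re v, Im v)"
        unfolding cbox_Pair_eq cbox_complex_eq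
        apply (auto simp: image_iff)
        subgoal for a b by (rule exI[of _ "Complex a b"]) auto
        done
      then show ?thesis by blast
    qed
    show "measure lborel ((\<lambda>(u,v). Complex u v) ` cbox u v) = 1 * measure lborel (cbox u v)" for u v :: "real \<times> real"
    proof (cases u, cases v)
      fix u1 u2 v1 v2 assume uv: "u = (u1,u2)" "v = (v1,v2)"
      have "(\<lambda>(u,v). Complex u v) ` cbox u v = cbox (Complex u1 u2) (Complex v1 v2)"
        unfolding uv cbox_Pair_eq cbox_complex_eq
        apply (auto simp: image_iff)
        subgoal for x by (rule bexI[of _ "Re x"], rule bexI[of _ "Im x"]) auto
        done
      then show ?thesis by (simp add: uv content_cbox_complex)
    qed
    show "(F has_integral integral (cbox (Complex a c) (Complex b d)) F) (cbox (Complex a c) (Complex b d))"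
      using assms by (simp add: has_integral_integral)
  qed
  moreover have "(\<lambda>w. (Re w, Im w)) ` cbox (Complex a c) (Complex b d) = cbox (a,c) (b,d)"
    unfolding cbox_Pair_eq cbox_complex_eq
    apply (auto simp: image_iff)
    subgoal for a b by (rule exI[of _ "Complex a b"]) auto
    done
  ultimately have "((\<lambda>(u,v). F (Complex u v)) has_integral integral (cbox (Complex a c) (Complex b d)) F) (cbox (a,c) (b,d))"
    by (simp add: split_beta')
  then show ?thesis by (simp add: integral_unique)
qed


lemma shift_part_le:
  fixes \<phi> :: "real \<Rightarrow> real"
  assumes cont: "continuous_on {c-R..c+R} \<phi>" and nn: "\<And>t. t\<in>{c-R..c+R} \<Longrightarrow> 0 \<le> \<phi> t" and R: "0 < R"
  shows "(\<lambda>s. \<phi>(c+s)) integrable_on {R/2..R} \<and> integral {R/2..R} (\<lambda>s. \<phi>(c+s)) \<le> integral {c-R..c+R} \<phi>"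
    and "(\<lambda>s. \<phi>(c-s)) integrable_on {R/2..R} \<and> integral {R/2..R} (\<lambda>s. \<phi>(c-s)) \<le> integral {c-R..c+R} \<phi>"
proof -
  have int: "\<phi> integrable_on {c-R..c+R}" using cont integrable_continuous_real by blast
  have i1: "\<phi> integrable_on {c+R/2..c+R}" using int integrable_on_subinterval R by fastforce
  have i2: "\<phi> integrable_on {c-R..c-R/2}" using int integrable_on_subinterval R by fastforce
  have "((\<lambda>x. \<phi>(x+c)) has_integral integral {c+R/2..c+R} \<phi>) {c+R/2-c..c+R-c}"
    using has_integral_shift_real_ivl_iff[of \<phi> _ "c+R/2" "c+R" c] i1 by (simp add: has_integral_integral)
  then have h1: "((\<lambda>s. \<phi>(c+s)) has_integral integral {c+R/2..c+R} \<phi>) {R/2..R}"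
    by (simp add: add.commute)
  have "integral {c+R/2..c+R} \<phi> \<le> integral {c-R..c+R} \<phi>"
    using int i1 nn R by (intro integral_subset_le) auto
  with h1 show "(\<lambda>s. \<phi>(c+s)) integrable_on {R/2..R} \<and> integral {R/2..R} (\<lambda>s. \<phi>(c+s)) \<le> integral {c-R..c+R} \<phi>"
    by (simp add: integral_unique has_integral_integrable)
  have "((\<lambda>x. \<phi>(x+c)) has_integral integral {c-R..c-R/2} \<phi>) {c-R-c..c-R/2-c}"
    using has_integral_shift_real_ivl_iff[of \<phi> _ "c-R" "c-R/2" c] i2 by (simp add: has_integral_integral)
  then have "((\<lambda>s. \<phi>(c+s)) has_integral integral {c-R..c-R/2} \<phi>) {-R..-(R/2)}"
    by (simp add: add.commute)
  then have h2: "((\<lambda>s. \<phi>(c-s)) has_integral integral {c-R..c-R/2} \<phi>) {R/2..R}"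
    using has_integral_reflect_real[of "\<lambda>s. \<phi>(c+s)" _ "-(R/2)" "-R"] by simp
  have "integral {c-R..c-R/2} \<phi> \<le> integral {c-R..c+R} \<phi>"
    using int i2 nn R by (intro integral_subset_le) auto
  with h2 show "(\<lambda>s. \<phi>(c-s)) integrable_on {R/2..R} \<and> integral {R/2..R} (\<lambda>s. \<phi>(c-s)) \<le> integral {c-R..c+R} \<phi>"
    by (simp add: integral_unique has_integral_integrable)
qed


lemma square_mean_bound:
  fixes G :: "complex \<Rightarrow> complex"
  assumes hol: "G holomorphic_on cbox (z - Complex R R) (z + Complex R R)" and R: "0 < R"
  shows "cmod (G z) \<le> 8 / (pi * R^2) * integral (cbox (z - Complex R R) (z + Complex R R)) (\<lambda>w. cmod (G w))"
proof -
  define x y where "x = Re z" and "y = Im z"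
  define Q where "Q = cbox (z - Complex R R) (z + Complex R R)"
  have Qc: "Q = cbox (Complex (x-R) (y-R)) (Complex (x+R) (y+R))"
  proof -
    have "z - Complex R R = Complex (x-R) (y-R)" "z + Complex R R = Complex (x+R) (y+R)"
      by (simp_all add: complex_eq_iff x_def y_def)
    then show ?thesis unfolding Q_def by simp
  qed
  have Qeq: "Q = {w. x - R \<le> Re w \<and> Re w \<le> x + R \<and> y - R \<le> Im w \<and> Im w \<le> y + R}"
    unfolding Qc by (auto simp: in_cbox_complex_iff)
  have contG: "continuous_on Q G" using hol unfolding Q_def by (simp add: holomorphic_on_imp_continuous_on)
  have cont2: "continuous_on (cbox (x-R, y-R) (x+R, y+R)) (\<lambda>(u,v). cmod (G (Complex u v)))"
    unfolding split_beta'
    by (rule continuous_on_norm, rule continuous_on_compose2[OF contG])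
       (auto intro!: continuous_intros simp: Qeq cbox_Pair_eq)
  have cont2': "continuous_on (cbox (y-R, x-R) (y+R, x+R)) (\<lambda>(v,u). cmod (G (Complex u v)))"
    unfolding split_beta'
    by (rule continuous_on_norm, rule continuous_on_compose2[OF contG])
       (auto intro!: continuous_intros simp: Qeq cbox_Pair_eq)
  define A where "A = (\<lambda>u. integral {y-R..y+R} (\<lambda>v. cmod (G (Complex u v))))"
  define B where "B = (\<lambda>v. integral {x-R..x+R} (\<lambda>u. cmod (G (Complex u v))))"
  have contA: "continuous_on {x-R..x+R} A"
    unfolding A_def using integral_continuous_on_param[of "{x-R..x+R}" "y-R" "y+R" "\<lambda>u v. cmod (G (Complex u v))"]
      cont2 by (simp add: cbox_Pair_eq)
  have contB: "continuous_on {y-R..y+R} B"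
    unfolding B_def using integral_continuous_on_param[of "{y-R..y+R}" "x-R" "x+R" "\<lambda>v u. cmod (G (Complex u v))"]
      cont2' by (simp add: cbox_Pair_eq)
  have nnA: "0 \<le> A u" for u unfolding A_def
    by (cases "(\<lambda>v. cmod (G (Complex u v))) integrable_on {y-R..y+R}") (auto intro: integral_nonneg simp: not_integrable_integral)
  have nnB: "0 \<le> B u" for u unfolding B_def
    by (cases "(\<lambda>v. cmod (G (Complex v u))) integrable_on {x-R..x+R}") (auto intro: integral_nonneg simp: not_integrable_integral)
  define P where "P = integral Q (\<lambda>w. cmod (G w))"
  have P1: "P = integral (cbox (x-R, y-R) (x+R, y+R)) (\<lambda>(u,v). cmod (G (Complex u v)))"
    unfolding P_def Qc
    by (rule integral_complex_pair, rule integrable_continuous, rule continuous_on_norm)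
       (use contG Qc in simp)
  have PA: "P = integral {x-R..x+R} A"
    unfolding P1 A_def using integral_prod_continuous[OF cont2] by simp
  have "P = integral (cbox (y-R, x-R) (y+R, x+R)) (\<lambda>(v,u). cmod (G (Complex u v)))"
    unfolding P1 using integral_swap_2dim[of "x-R" "y-R" "x+R" "y+R" "\<lambda>u v. cmod (G (Complex u v))"] cont2
    by simp
  then have PB: "P = integral {y-R..y+R} B"
    unfolding B_def using integral_prod_continuous[OF cont2'] by simp
  have pt: "pi*R*cmod (G z) \<le> A(x+s) + A(x-s) + B(y+s) + B(y-s)" if "s \<in> {R/2..R}" for s
  proof -
    have s: "0 < s" "s \<le> R" using that R by auto
    have "2*pi*cmod (G z) \<le> (A(x+s) + A(x-s) + B(y+s) + B(y-s)) / s"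
      using square_cauchy_bound[OF hol s] unfolding A_def B_def x_def y_def by simp
    then have "s * (2*pi*cmod (G z)) \<le> A(x+s) + A(x-s) + B(y+s) + B(y-s)"
      using s by (simp add: field_simps)
    moreover have "pi*R*cmod (G z) \<le> s * (2*pi*cmod (G z))"
    proof -
      have "R * cmod (G z) \<le> 2 * s * cmod (G z)" using that by (intro mult_right_mono) auto
      then have "pi * (R * cmod (G z)) \<le> pi * (2 * s * cmod (G z))" by (intro mult_left_mono) auto
      then show ?thesis by (simp add: algebra_simps)
    qed
    ultimately show ?thesis by linarith
  qed
  note iA = shift_part_le[OF contA _ R] and iB = shift_part_le[OF contB _ R]
  have ints: "(\<lambda>s. A(x+s) + A(x-s) + B(y+s) + B(y-s)) integrable_on {R/2..R}"
    using iA iB nnA nnB by (intro integrable_add) auto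
  have "(R/2) * (pi*R*cmod (G z)) = integral {R/2..R} (\<lambda>s. pi*R*cmod (G z))"
    using R by simp
  also have "\<dots> \<le> integral {R/2..R} (\<lambda>s. A(x+s) + A(x-s) + B(y+s) + B(y-s))"
    using ints pt by (intro integral_le) auto
  also have "\<dots> = integral {R/2..R} (\<lambda>s. A(x+s)) + integral {R/2..R} (\<lambda>s. A(x-s))
      + integral {R/2..R} (\<lambda>s. B(y+s)) + integral {R/2..R} (\<lambda>s. B(y-s))"
    using iA iB nnA nnB by (simp add: integral_add integrable_add)
  also have "\<dots> \<le> 4 * P"
    using iA iB nnA nnB PA PB by fastforce
  finally have "(R/2) * (pi*R*cmod (G z)) \<le> 4 * P" .
  then have "cmod (G z) * (pi * R^2) \<le> 8 * P" by (simp add: power2_eq_square algebra_simps)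
  then show ?thesis using R unfolding P_def Q_def by (simp add: field_simps)
qed


lemma dil_a:
  fixes z :: complex assumes "n \<ge> 1" "cmod z < 1"
  shows "1 - (cmod z)^2 \<le> 1 - (cmod (z^n))^2 \<and> 1 - (cmod (z^n))^2 \<le> real n * (1 - (cmod z)^2)"
proof -
  define t where "t = (cmod z)^2"
  have t: "0 \<le> t" "t < 1" using assms(2) unfolding t_def by (auto simp: power_less_one_iff)
  have e: "(cmod (z^n))^2 = t^n" unfolding t_def by (simp add: norm_power power_mult_distrib[symmetric] power_mult[symmetric] mult.commute)
  have "t^n \<le> t^1" using t assms(1) by (intro power_decreasing) auto
  moreover have "1 + real n * (t - 1) \<le> (1 + (t - 1))^n"
    using t by (intro Bernoulli_inequality) auto
  ultimately show ?thesis unfolding e t_def[symmetric] by (simp add: algebra_simps)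
qed

lemma moebius_identity:
  fixes a z :: complex
  shows "(cmod (1 + cnj a * z))^2 - (cmod (z + a))^2 = (1 - (cmod a)^2) * (1 - (cmod z)^2)"
  unfolding cmod_power2 by (simp add: algebra_simps power2_eq_square)

lemma dil_b:
  fixes z a :: complex assumes a: "cmod a < 1" and z: "cmod z < 1"
  shows "(1 - (cmod a)^2)/4 * (1 - (cmod z)^2) \<le> 1 - (cmod ((z + a) / (1 + cnj a * z)))^2 \<and>
         1 - (cmod ((z + a) / (1 + cnj a * z)))^2 \<le> (1 - (cmod a)^2)/(1 - cmod a)^2 * (1 - (cmod z)^2)"
proof -
  define d where "d = cmod (1 + cnj a * z)"
  have "cmod (cnj a * z) \<le> cmod a" using z by (simp add: norm_mult mult_left_le)
  then have d1: "1 - cmod a \<le> d" unfolding d_def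
    using norm_diff_ineq[of 1 "cnj a * z"] by simp
  have d2: "d \<le> 2" unfolding d_def using \<open>cmod (cnj a * z) \<le> cmod a\<close> a
    using norm_triangle_ineq[of 1 "cnj a * z"] by simp
  have dpos: "0 < d" using d1 a by linarith
  have "1 - (cmod ((z + a) / (1 + cnj a * z)))^2 = (d^2 - (cmod (z+a))^2) / d^2"
    using dpos unfolding d_def by (simp add: norm_divide power_divide field_simps)
  also have "\<dots> = (1 - (cmod a)^2) * (1 - (cmod z)^2) / d^2"
    unfolding d_def moebius_identity ..
  finally have eq: "1 - (cmod ((z + a) / (1 + cnj a * z)))^2 = (1 - (cmod a)^2) * (1 - (cmod z)^2) / d^2" .
  have P: "0 \<le> (1 - (cmod a)^2) * (1 - (cmod z)^2)"
    using a z by (intro mult_nonneg_nonneg) (auto simp: abs_square_le_1 power_le_one)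
  have d4: "d^2 \<le> 2^2" using d2 dpos by (intro power_mono) auto
  have "(1 - (cmod a)^2) * (1 - (cmod z)^2) / 4 \<le> (1 - (cmod a)^2) * (1 - (cmod z)^2) / d^2"
    using d4 dpos P by (intro divide_left_mono) auto
  moreover have "(1 - (cmod a)^2) * (1 - (cmod z)^2) / d^2 \<le> (1 - (cmod a)^2) * (1 - (cmod z)^2) / (1 - cmod a)^2"
    using d1 dpos P a by (intro divide_left_mono) (auto simp: power2_eq_square intro!: mult_mono mult_pos_pos)
  ultimately show ?thesis unfolding eq by (simp add: field_simps)
qed


lemma pw_lower:
  fixes c q k J p :: real
  assumes "0 < c" "0 < q" "0 < k" "c*q*k^2 \<le> J" "0 < p"
  shows "c powr (p/2) * k powr p * q powr (3*p/2 - 2) \<le> \<bar>J\<bar> powr (p/2) * q powr (p-2)"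
proof -
  have "0 < c*q*k^2" using assms by simp
  then have J: "0 < J" using assms(4) by linarith
  have "(c*q*k^2) powr (p/2) \<le> \<bar>J\<bar> powr (p/2)"
    using assms J by (intro powr_mono2) auto
  moreover have "(c*q*k^2) powr (p/2) = c powr (p/2) * q powr (p/2) * k powr p"
  proof -
    have "(k^2) powr (p/2) = (k powr 2) powr (p/2)"
      using assms by simp
    also have "\<dots> = k powr p" by (simp add: powr_powr)
    finally have "(k^2) powr (p/2) = k powr p" .
    then show ?thesis by (simp add: powr_mult)
  qed
  ultimately have "c powr (p/2) * q powr (p/2) * k powr p * q powr (p-2) \<le> \<bar>J\<bar> powr (p/2) * q powr (p-2)"
    by (intro mult_right_mono) auto
  moreover have "q powr (p/2) * q powr (p-2) = q powr (3*p/2 - 2)"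
  proof -
    have "p/2 + (p-2) = 3*p/2 - 2" by simp
    then show ?thesis by (metis powr_add)
  qed
  ultimately show ?thesis by (metis (no_types, lifting) mult.commute mult.left_commute)
qed

lemma pw_upper:
  fixes C q k J p :: real
  assumes "0 < C" "0 < q" "0 < k" "0 \<le> J" "J \<le> C*q*k^2" "0 < p"
  shows "(q * sqrt \<bar>J\<bar>) powr p \<le> C powr (p/2) * q powr (3*p/2) * k powr p"
proof -
  have "(q * sqrt \<bar>J\<bar>) powr p = q powr p * J powr (p/2)"
  proof -
    have "sqrt J powr p = (J powr (1/2)) powr p" using assms by (simp add: powr_half_sqrt)
    also have "\<dots> = J powr (p/2)" by (simp add: powr_powr)
    finally have "sqrt J powr p = J powr (p/2)" .
    moreover have "\<bar>J\<bar> = J" using assms by simp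
    ultimately show ?thesis by (simp add: powr_mult)
  qed
  also have "J powr (p/2) \<le> (C*q*k^2) powr (p/2)" using assms by (intro powr_mono2) auto
  also have "(C*q*k^2) powr (p/2) = C powr (p/2) * q powr (p/2) * k powr p"
  proof -
    have "(k^2) powr (p/2) = (k powr 2) powr (p/2)"
      using assms by simp
    also have "\<dots> = k powr p" by (simp add: powr_powr)
    finally have "(k^2) powr (p/2) = k powr p" .
    then show ?thesis by (simp add: powr_mult)
  qed
  finally have "(q * sqrt \<bar>J\<bar>) powr p \<le> q powr p * (C powr (p/2) * q powr (p/2) * k powr p)"
    using assms by (simp add: mult_left_mono)
  moreover have "q powr p * q powr (p/2) = q powr (3*p/2)"
  proof -
    have "p + p/2 = 3*p/2" by simp
    then show ?thesis by (metis powr_add)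
  qed
  ultimately show ?thesis by (metis (no_types, lifting) mult.commute mult.left_commute)
qed


lemma tail_small:
  fixes u :: "complex \<Rightarrow> real"
  assumes int: "u integrable_on ball 0 1" and nn: "\<And>\<zeta>. \<zeta> \<in> ball 0 1 \<Longrightarrow> 0 \<le> u \<zeta>" and e: "0 < \<epsilon>"
  shows "\<exists>r. 0 \<le> r \<and> r < 1 \<and> (\<forall>a b. cbox a b \<subseteq> ball 0 1 \<inter> {\<zeta>. r < cmod \<zeta>} \<longrightarrow>
            u integrable_on cbox a b \<and> integral (cbox a b) u < \<epsilon>)"
proof -
  have abs: "u absolutely_integrable_on ball 0 1"
    using int nn by (rule nonnegative_absolutely_integrable_1)
  define T where "T = (\<lambda>n::nat. \<lambda>\<zeta>. if \<zeta> \<in> {\<zeta>. 1 - 1/(real n + 2) < cmod \<zeta>} then u \<zeta> else 0)"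
  have Tint: "T n integrable_on ball 0 1" for n
  proof -
    let ?S = "{\<zeta>::complex. 1 - 1/(real n + 2) < cmod \<zeta>}"
    have op: "open ?S" by (intro open_Collect_less continuous_intros)
    have ms: "?S \<inter> ball 0 1 \<in> sets lebesgue"
      using lmeasurable_open[of "?S \<inter> ball 0 1"] op by (auto intro: fmeasurableD open_Int)
    have "u absolutely_integrable_on (?S \<inter> ball 0 1)"
      by (rule set_integrable_subset[OF abs ms]) auto
    then have "u integrable_on (?S \<inter> ball 0 1)" using absolutely_integrable_on_def by blast
    then show ?thesis unfolding T_def by (simp only: integrable_restrict_Int)
  qed
  have le: "norm (T n \<zeta>) \<le> u \<zeta>" if "\<zeta> \<in> ball 0 1" for n \<zeta>
    using nn[OF that] unfolding T_def by auto
  have conv: "(\<lambda>n. T n \<zeta>) \<longlonglongrightarrow> 0" if "\<zeta> \<in> ball 0 1" for \<zeta>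
  proof -
    have "0 < 1 - cmod \<zeta>" using that by simp
    then obtain N :: nat where N: "1 / (1 - cmod \<zeta>) < real N" using reals_Archimedean2 by blast
    have "T n \<zeta> = 0" if "n \<ge> N" for n
    proof -
      have "1/(real n + 2) < 1 - cmod \<zeta>"
      proof -
        have "1 / (1 - cmod \<zeta>) < real n + 2" using N that by linarith
        then show ?thesis using \<open>0 < 1 - cmod \<zeta>\<close> by (simp add: field_simps)
      qed
      then show ?thesis unfolding T_def by auto
    qed
    then show ?thesis by (intro tendsto_eventually) (auto simp: eventually_sequentially)
  qed
  note DC = dominated_convergence(2)[where f=T and g="\<lambda>_. 0", OF Tint int le conv]
  have "(\<lambda>n. integral (ball 0 1) (T n)) \<longlonglongrightarrow> integral (ball 0 1) (\<lambda>_. 0::real)"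
    using DC by simp
  then have "(\<lambda>n. integral (ball 0 1) (T n)) \<longlonglongrightarrow> 0" by simp
  then obtain N where N: "integral (ball 0 1) (T N) < \<epsilon>"
    using order_tendstoD(2)[OF _ e] by (metis (no_types, lifting) eventually_sequentially order_refl)
  define r where "r = 1 - 1/(real N + 2)"
  have r: "0 \<le> r" "r < 1" unfolding r_def by (auto simp: field_simps)
  have "u integrable_on cbox a b \<and> integral (cbox a b) u < \<epsilon>"
    if sub: "cbox a b \<subseteq> ball 0 1 \<inter> {\<zeta>. r < cmod \<zeta>}" for a b
  proof -
    have absT: "T N absolutely_integrable_on ball 0 1"
      using Tint[of N] le by (intro nonnegative_absolutely_integrable_1) (auto simp: T_def nn)
    have iT: "T N integrable_on cbox a b"
      using absolutely_integrable_on_subcbox[OF absT] sub absolutely_integrable_on_def by blast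
    have iu: "u integrable_on cbox a b"
      using absolutely_integrable_on_subcbox[OF abs] sub absolutely_integrable_on_def by blast
    have "integral (cbox a b) u = integral (cbox a b) (T N)"
      using sub by (intro integral_cong) (auto simp: T_def r_def)
    also have "\<dots> \<le> integral (ball 0 1) (T N)"
      using sub iT Tint[of N] by (intro integral_subset_le) (auto simp: T_def nn)
    finally show ?thesis using N iu by linarith
  qed
  then show ?thesis using r by blast
qed


lemma m_lemma:
  fixes e \<delta> q :: real
  assumes "0 < \<delta>" "\<delta>/2 \<le> q" "q \<le> 3*\<delta>"
  shows "min ((1/2) powr e) (3 powr e) * \<delta> powr e \<le> q powr e"
proof -
  define l where "l = q / \<delta>"
  have l: "1/2 \<le> l" "l \<le> 3" using assms unfolding l_def by (auto simp: field_simps)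
  have q: "q = l * \<delta>" unfolding l_def using assms by simp
  have "min ((1/2) powr e) (3 powr e) \<le> l powr e"
  proof (cases "0 \<le> e")
    case True
    then have "(1/2) powr e \<le> l powr e" using l by (intro powr_mono2) auto
    then show ?thesis by linarith
  next
    case False
    then have "3 powr e \<le> l powr e" using l by (intro powr_mono2') auto
    then show ?thesis by linarith
  qed
  then have "min ((1/2) powr e) (3 powr e) * \<delta> powr e \<le> l powr e * \<delta> powr e"
    by (intro mult_right_mono) auto
  also have "\<dots> = q powr e" unfolding q by (simp add: powr_mult)
  finally show ?thesis .
qed

lemma main_core:
  fixes p c C :: real and H F :: "complex \<Rightarrow> complex"
  assumes p: "1 < p" and c: "0 < c" and C: "0 < C"
    and holH: "H holomorphic_on ball 0 1" and nz: "\<forall>z\<in>ball 0 1. H z \<noteq> 0"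
    and jb: "\<forall>z\<in>ball 0 1. c*(1-(cmod z)^2)*(cmod (H z))^2 \<le> jac F z \<and> jac F z \<le> C*(1-(cmod z)^2)*(cmod (H z))^2"
    and int: "(\<lambda>z. \<bar>jac F z\<bar> powr (p/2) * (1-(cmod z)^2) powr (p-2)) integrable_on ball 0 1"
  shows "F \<in> BT0"
proof -
  obtain L where L: "L holomorphic_on ball 0 1" "\<And>z. z \<in> ball 0 1 \<Longrightarrow> H z = exp (L z)"
    using contractible_imp_holomorphic_log[OF holH convex_imp_contractible[OF convex_ball]] nz by metis
  define Gp where "Gp = (\<lambda>\<zeta>. exp (complex_of_real p * L \<zeta>))"
  have holG: "Gp holomorphic_on ball 0 1" unfolding Gp_def by (intro holomorphic_intros L(1))
  have Gn: "cmod (Gp \<zeta>) = cmod (H \<zeta>) powr p" if "\<zeta> \<in> ball 0 1" for \<zeta>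
    using that by (simp add: Gp_def L(2) norm_exp_eq_Re powr_def)
  define u where "u = (\<lambda>z. \<bar>jac F z\<bar> powr (p/2) * (1-(cmod z)^2) powr (p-2))"
  define e where "e = 3*p/2 - 2"
  define c1 where "c1 = c powr (p/2)"
  have c1: "0 < c1" unfolding c1_def using c by simp
  have qpos: "0 < 1 - (cmod \<zeta>)^2" if "\<zeta> \<in> ball 0 1" for \<zeta>
    using that by (simp add: power_less_one_iff abs_square_less_1)
  have lower: "c1 * cmod (Gp \<zeta>) * (1 - (cmod \<zeta>)^2) powr e \<le> u \<zeta>" if "\<zeta> \<in> ball 0 1" for \<zeta>
    using pw_lower[of c "1-(cmod \<zeta>)^2" "cmod (H \<zeta>)" "jac F \<zeta>" p] c qpos[OF that] nz that jb p
    unfolding u_def c1_def e_def Gn[OF that] by auto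
  have unn: "0 \<le> u \<zeta>" for \<zeta> unfolding u_def by simp
  have upper: "((1-(cmod z)^2) * sqrt \<bar>jac F z\<bar>) powr p \<le> C powr (p/2) * (1-(cmod z)^2) powr (3*p/2) * cmod (Gp z)"
    if "z \<in> ball 0 1" for z
  proof -
    have "0 \<le> c*(1-(cmod z)^2)*(cmod (H z))^2" using c qpos[OF that] by simp
    then have "0 \<le> jac F z" using jb that by fastforce
    then show ?thesis
      using pw_upper[of C "1-(cmod z)^2" "cmod (H z)" "jac F z" p] C qpos[OF that] nz that jb p
      unfolding Gn[OF that] by auto
  qed
  define m where "m = min ((1/2) powr e) (3 powr e)"
  have m: "0 < m" unfolding m_def by simp
  define K where "K = C powr (p/2) * 2 powr (3*p/2) * 128 / (pi * c1 * m)"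
  have K: "0 < K" unfolding K_def using C c1 m by simp
  show ?thesis unfolding BT0_def
  proof (intro CollectI allI impI)
    fix \<epsilon> :: real assume \<epsilon>: "0 < \<epsilon>"
    define \<epsilon>' where "\<epsilon>' = \<epsilon> powr p / (K + 1)"
    have \<epsilon>': "0 < \<epsilon>'" unfolding \<epsilon>'_def using \<epsilon> K by simp
    obtain r where r: "0 \<le> r" "r < 1" and tl: "\<And>a b. cbox a b \<subseteq> ball 0 1 \<inter> {\<zeta>. r < cmod \<zeta>} \<Longrightarrow>
            u integrable_on cbox a b \<and> integral (cbox a b) u < \<epsilon>'"
      using tail_small[of u, OF _ _ \<epsilon>'] int unn unfolding u_def by blast
    show "\<exists>r<1. \<forall>z. r < cmod z \<and> cmod z < 1 \<longrightarrow> (1 - (cmod z)\<^sup>2) * sqrt \<bar>jac F z\<bar> < \<epsilon>"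
    proof (intro exI[of _ "(2*r+1)/3"] conjI allI impI)
      show "(2*r+1)/3 < 1" using r by simp
      fix z assume z: "(2*r+1)/3 < cmod z \<and> cmod z < 1"
      then have zb: "z \<in> ball 0 1" by simp
      define \<delta> where "\<delta> = 1 - cmod z"
      have \<delta>: "0 < \<delta>" using z unfolding \<delta>_def by simp
      define R where "R = \<delta> / 4"
      have R: "0 < R" using \<delta> unfolding R_def by simp
      define Q where "Q = cbox (z - Complex R R) (z + Complex R R)"
      have near: "cmod (\<zeta> - z) \<le> \<delta>/2" if "\<zeta> \<in> Q" for \<zeta>
      proof -
        have "\<bar>Re (\<zeta> - z)\<bar> \<le> R" "\<bar>Im (\<zeta> - z)\<bar> \<le> R" using that unfolding Q_def
          by (auto simp: in_cbox_complex_iff)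
        then show ?thesis using cmod_le[of "\<zeta> - z"] unfolding R_def by linarith
      qed
      have Qsub: "Q \<subseteq> ball 0 1 \<inter> {\<zeta>. r < cmod \<zeta>}"
      proof
        fix \<zeta> assume "\<zeta> \<in> Q"
        then have "cmod (\<zeta> - z) \<le> \<delta>/2" by (rule near)
        moreover have "cmod z - cmod (\<zeta> - z) \<le> cmod \<zeta>" "cmod \<zeta> \<le> cmod z + cmod (\<zeta> - z)"
          using norm_triangle_ineq2[of z "z - \<zeta>"] norm_triangle_ineq[of z "\<zeta> - z"] norm_minus_commute[of z \<zeta>]
          by auto
        ultimately show "\<zeta> \<in> ball 0 1 \<inter> {\<zeta>. r < cmod \<zeta>}" using z unfolding \<delta>_def by auto
      qed
      have qQ: "\<delta>/2 \<le> 1 - (cmod \<zeta>)^2 \<and> 1 - (cmod \<zeta>)^2 \<le> 3*\<delta>" if "\<zeta> \<in> Q" for \<zeta>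
      proof -
        have a: "cmod (\<zeta> - z) \<le> \<delta>/2" using near that .
        have "cmod z - cmod (\<zeta> - z) \<le> cmod \<zeta>" "cmod \<zeta> \<le> cmod z + cmod (\<zeta> - z)"
          using norm_triangle_ineq2[of z "z - \<zeta>"] norm_triangle_ineq[of z "\<zeta> - z"] norm_minus_commute[of z \<zeta>]
          by auto
        then have b: "\<delta>/2 \<le> 1 - cmod \<zeta>" "1 - cmod \<zeta> \<le> 3*\<delta>/2" "cmod \<zeta> < 1"
          using a \<delta> unfolding \<delta>_def by auto
        have e1: "1 - (cmod \<zeta>)^2 = (1 - cmod \<zeta>) * (1 + cmod \<zeta>)" by (simp add: power2_eq_square algebra_simps)
        have e2: "1 - cmod \<zeta> \<le> (1 - cmod \<zeta>) * (1 + cmod \<zeta>)"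
          using mult_left_mono[of 1 "1 + cmod \<zeta>" "1 - cmod \<zeta>"] b by simp
        have "(1 - cmod \<zeta>) * (1 + cmod \<zeta>) \<le> (3*\<delta>/2) * 2" using b by (intro mult_mono) auto
        then have e3: "(1 - cmod \<zeta>) * (1 + cmod \<zeta>) \<le> 3*\<delta>" by simp
        show ?thesis using b(1) e1 e2 e3 by linarith
      qed
      obtain iu: "u integrable_on Q" and Xl: "integral Q u < \<epsilon>'"
        using tl[OF Qsub[unfolded Q_def]] unfolding Q_def by blast
      define X where "X = integral Q u"
      define Y where "Y = integral Q (\<lambda>w. cmod (Gp w))"
      have holQ: "Gp holomorphic_on Q" by (rule holomorphic_on_subset[OF holG]) (use Qsub in auto)
      have iG: "(\<lambda>w. cmod (Gp w)) integrable_on Q"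
        unfolding Q_def by (intro integrable_continuous continuous_on_norm holomorphic_on_imp_continuous_on)
           (use holQ Q_def in auto)
      have mean: "cmod (Gp z) \<le> 8 / (pi * R^2) * Y"
        using square_mean_bound[OF holQ[unfolded Q_def] R] unfolding Y_def Q_def .
      have XY: "c1 * m * \<delta> powr e * Y \<le> X"
      proof -
        have "integral Q (\<lambda>w. c1 * m * \<delta> powr e * cmod (Gp w)) \<le> X"
          unfolding X_def
        proof (rule integral_le)
          show "(\<lambda>w. c1 * m * \<delta> powr e * cmod (Gp w)) integrable_on Q" using integrable_on_mult_right[OF iG, of "c1 * m * \<delta> powr e"] by simp
          show "u integrable_on Q" by (rule iu)
          fix w assume w: "w \<in> Q"
          have "m * \<delta> powr e \<le> (1 - (cmod w)^2) powr e" unfolding m_def using m_lemma qQ[OF w] \<delta> by blast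
          then have "c1 * cmod (Gp w) * (m * \<delta> powr e) \<le> c1 * cmod (Gp w) * (1 - (cmod w)^2) powr e"
            using c1 by (intro mult_left_mono) auto
          also have "\<dots> \<le> u w" using lower Qsub w by blast
          finally show "c1 * m * \<delta> powr e * cmod (Gp w) \<le> u w" by (simp add: algebra_simps)
        qed
        then show ?thesis unfolding Y_def by simp
      qed
      have zq: "1 - (cmod z)^2 \<le> 2 * \<delta>"
      proof -
        have "1 - (cmod z)^2 = \<delta> * (1 + cmod z)" unfolding \<delta>_def by (simp add: power2_eq_square algebra_simps)
        also have "\<dots> \<le> \<delta> * 2" using z \<delta> by (intro mult_left_mono) auto
        finally show ?thesis by simp
      qed
      define T where "T = (1 - (cmod z)^2) * sqrt \<bar>jac F z\<bar>"
      have T0: "0 \<le> T" unfolding T_def using qpos[OF zb] by simp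
      have "T powr p \<le> C powr (p/2) * (1-(cmod z)^2) powr (3*p/2) * cmod (Gp z)"
        unfolding T_def by (rule upper[OF zb])
      also have "\<dots> \<le> C powr (p/2) * (2*\<delta>) powr (3*p/2) * cmod (Gp z)"
        using zq qpos[OF zb] p by (intro mult_right_mono mult_left_mono powr_mono2) auto
      also have "\<dots> \<le> C powr (p/2) * (2*\<delta>) powr (3*p/2) * (8 / (pi * R^2) * Y)"
        using mean by (intro mult_left_mono) auto
      also have "\<dots> = C powr (p/2) * 2 powr (3*p/2) * 128 / pi * (\<delta> powr (3*p/2) / \<delta>^2) * Y"
      proof -
        have a: "(2*\<delta>) powr (3*p/2) = 2 powr (3*p/2) * \<delta> powr (3*p/2)" by (rule powr_mult)
        have b: "8 / (pi * R^2) = 128 / (pi * \<delta>^2)" unfolding R_def by (simp add: power2_eq_square)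
        show ?thesis unfolding a b by (simp add: field_simps)
      qed
      also have "\<delta> powr (3*p/2) / \<delta>^2 = \<delta> powr e"
      proof -
        have "e + 2 = 3*p/2" unfolding e_def by simp
        then have "\<delta> powr (3*p/2) = \<delta> powr e * \<delta> powr 2" by (metis powr_add)
        then show ?thesis using \<delta> by simp
      qed
      also have "C powr (p/2) * 2 powr (3*p/2) * 128 / pi * \<delta> powr e * Y = K * (c1 * m * \<delta> powr e * Y)"
        unfolding K_def using c1 m by (simp add: field_simps)
      also have "\<dots> \<le> K * X" using XY K by (intro mult_left_mono) auto
      also have "\<dots> < K * \<epsilon>'" using Xl K unfolding X_def by simp
      also have "\<dots> < \<epsilon> powr p"
      proof -
        have "K * \<epsilon>' = \<epsilon> powr p * (K / (K+1))" unfolding \<epsilon>'_def by simp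
        moreover have "K / (K+1) < 1" using K by simp
        moreover have "0 < \<epsilon> powr p" using \<epsilon> by simp
        ultimately show ?thesis by (metis mult.right_neutral mult_strict_left_mono)
      qed
      finally have Tp: "T powr p < \<epsilon> powr p" .
      show "(1 - (cmod z)\<^sup>2) * sqrt \<bar>jac F z\<bar> < \<epsilon>"
        unfolding T_def[symmetric]
      proof (rule ccontr)
        assume "\<not> T < \<epsilon>"
        then have "\<epsilon> powr p \<le> T powr p" using \<epsilon> p by (intro powr_mono2) auto
        with Tp show False by linarith
      qed
    qed
  qed
qed


lemma jac_harm:
  assumes h: "(h has_field_derivative h') (at z)" and g: "(g has_field_derivative g') (at z)"
  shows "jac (\<lambda>z. h z + cnj (g z)) z = (cmod h')^2 - (cmod g')^2"
proof -
  have "((\<lambda>z. h z + cnj (g z)) has_derivative (\<lambda>v. h' * v + cnj (g' * v))) (at z)"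
  proof (rule has_derivative_add)
    show "(h has_derivative (*) h') (at z)" using h by (simp add: has_field_derivative_def)
    have "(g has_derivative (*) g') (at z)" using g by (simp add: has_field_derivative_def)
    then show "((\<lambda>z. cnj (g z)) has_derivative (\<lambda>v. cnj (g' * v))) (at z)"
      using bounded_linear.has_derivative[OF bounded_linear_cnj] by blast
  qed
  then have fd: "frechet_derivative (\<lambda>z. h z + cnj (g z)) (at z) = (\<lambda>v. h' * v + cnj (g' * v))"
    using frechet_derivative_at by metis
  have "wirt_z (\<lambda>z. h z + cnj (g z)) z = h'"
    unfolding wirt_z_def fd by (simp add: algebra_simps)
  moreover have "wirt_zbar (\<lambda>z. h z + cnj (g z)) z = cnj g'"
    unfolding wirt_zbar_def fd by (simp add: algebra_simps)
  ultimately show ?thesis unfolding jac_def by simp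
qed

theorem mainTheorem12:
  fixes p :: real and h g :: "complex \<Rightarrow> complex"
  assumes "1 < p"
    and "h holomorphic_on ball 0 1" and "g holomorphic_on ball 0 1"
    and "\<forall>z\<in>ball 0 1. deriv h z \<noteq> 0"
    and "(\<exists>n::nat. n \<ge> 1 \<and> (\<forall>z\<in>ball 0 1. deriv g z / deriv h z = z ^ n))
       \<or> (\<exists>a. cmod a < 1 \<and> (\<forall>z\<in>ball 0 1. deriv g z / deriv h z = (z + a) / (1 + cnj a * z)))"
    and "(\<lambda>z. h z + cnj (g z)) \<in> BT p"
  shows "(\<lambda>z. h z + cnj (g z)) \<in> BT0"
proof -
  note p = assms(1) and holh = assms(2) and holg = assms(3) and nz = assms(4)
  have holH: "deriv h holomorphic_on ball 0 1" using holh by (rule holomorphic_deriv) simp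
  have jeq: "jac (\<lambda>z. h z + cnj (g z)) z = (cmod (deriv h z))^2 - (cmod (deriv g z))^2"
    if "z \<in> ball 0 1" for z
    by (rule jac_harm; rule holomorphic_derivI[OF _ open_ball that]) (use holh holg in auto)
  have int: "(\<lambda>z. \<bar>jac (\<lambda>z. h z + cnj (g z)) z\<bar> powr (p/2) * (1-(cmod z)^2) powr (p-2)) integrable_on ball 0 1"
    using assms(6) unfolding BT_def by simp
  have key: "(\<lambda>z. h z + cnj (g z)) \<in> BT0"
    if c: "0 < c" and C: "0 < C" and W: "\<forall>z\<in>ball 0 1. deriv g z / deriv h z = W z"
      and Wb: "\<forall>z\<in>ball 0 1. c*(1-(cmod z)^2) \<le> 1-(cmod (W z))^2 \<and> 1-(cmod (W z))^2 \<le> C*(1-(cmod z)^2)"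
    for c C :: real and W :: "complex \<Rightarrow> complex"
  proof (rule main_core[OF p c C holH nz _ int], intro ballI)
    fix z :: complex assume z: "z \<in> ball 0 1"
    have "deriv g z = W z * deriv h z" using W z nz by (auto simp: field_simps)
    then have "jac (\<lambda>z. h z + cnj (g z)) z = (cmod (deriv h z))^2 * (1 - (cmod (W z))^2)"
      unfolding jeq[OF z] by (simp add: norm_mult power_mult_distrib algebra_simps)
    moreover have "c*(1-(cmod z)^2) * (cmod (deriv h z))^2 \<le> (1-(cmod (W z))^2) * (cmod (deriv h z))^2"
      using Wb z by (intro mult_right_mono) auto
    moreover have "(1-(cmod (W z))^2) * (cmod (deriv h z))^2 \<le> C*(1-(cmod z)^2) * (cmod (deriv h z))^2"
      using Wb z by (intro mult_right_mono) auto
    ultimately show "c * (1 - (cmod z)\<^sup>2) * (cmod (deriv h z))\<^sup>2 \<le> jac (\<lambda>z. h z + cnj (g z)) z \<and>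
         jac (\<lambda>z. h z + cnj (g z)) z \<le> C * (1 - (cmod z)\<^sup>2) * (cmod (deriv h z))\<^sup>2"
      by (simp add: mult.commute)
  qed
  from assms(5) show ?thesis
  proof
    assume "\<exists>n::nat. n \<ge> 1 \<and> (\<forall>z\<in>ball 0 1. deriv g z / deriv h z = z ^ n)"
    then obtain n :: nat where n: "n \<ge> 1" "\<forall>z\<in>ball 0 1. deriv g z / deriv h z = z ^ n" by blast
    show ?thesis
      by (rule key[of 1 "real n" "\<lambda>z. z^n"]) (use n dil_a in auto)
  next
    assume "\<exists>a. cmod a < 1 \<and> (\<forall>z\<in>ball 0 1. deriv g z / deriv h z = (z + a) / (1 + cnj a * z))"
    then obtain a where a: "cmod a < 1" "\<forall>z\<in>ball 0 1. deriv g z / deriv h z = (z + a) / (1 + cnj a * z)" by blast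
    have a2: "0 < 1 - (cmod a)^2" using a(1) by (simp add: abs_square_less_1)
    show ?thesis
      by (rule key[of "(1 - (cmod a)^2)/4" "(1 - (cmod a)^2)/(1 - cmod a)^2" "\<lambda>z. (z + a) / (1 + cnj a * z)"])
         (use a a2 dil_b in auto)
  qed
qed

end
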